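(* Let $r_1=1/4$, $r_n=\frac1{2n}$ for $n\ge2$, and $p_n=\frac12+r_n$, $q_n=1-p_n$, $\rho_n=q_n/p_n$ for $n\ge1$. Then for every $\varepsilon>0$ there exists $i_0>0$ such that $$(1-\varepsilon)\frac{i(j-i)}{j}\le D(i,j)\le(1+\varepsilon)\frac{i(j-i)}{j}\quad\text{for all }j>i\ge i_0,$$ $$(1-\varepsilon)i\le D(i)\le(1+\varepsilon)i\quad\text{for all }i\ge i_0.$$
   Context: For integers $n\ge m\ge0$ let $D(m,n)=0$ if $n=m$, $D(m,n)=1$ if $n=m+1$, and $D(m,n)=1+\sum_{j=1}^{n-m-1}\rho_{m+1}\cdots\rho_{m+j}$ if $n\ge m+2$; let $D(m)=\lim_{n\to\infty}D(m,n)$. *)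

theory Defs
  imports Complex_Main
begin

definition r :: "nat \<Rightarrow> real" where
  "r n = (if n = 1 then 1/4 else 1 / (2 * real n))"

definition p :: "nat \<Rightarrow> real" where
  "p n = 1/2 + r n"

definition q :: "nat \<Rightarrow> real" where
  "q n = 1 - p n"

definition rho :: "nat \<Rightarrow> real" where
  "rho n = q n / p n"

text \<open>D(m,n) for n \<ge> m: 0 if n = m, 1 if n = m+1, and
  1 + sum_{j=1}^{n-m-1} rho_{m+1} ... rho_{m+j} if n \<ge> m+2
  (the last formula also gives 1 when n = m+1).\<close>
definition D :: "nat \<Rightarrow> nat \<Rightarrow> real" where
  "D m n = (if n = m then 0
            else 1 + (\<Sum>j=1..n-m-1. \<Prod>k=1..j. rho (m + k)))"

definition Dlim :: "nat \<Rightarrow> real" where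
  "Dlim m = lim (\<lambda>n. D m n)"

end

theory Submission
  imports Defs
begin

lemma rho_eq: "n \<ge> 2 \<Longrightarrow> rho n = (real n - 1) / (real n + 1)"
proof -
  assume n: "n \<ge> 2"
  have "r n = 1 / (2 * real n)" using n by (simp add: r_def)
  then have "p n = (real n + 1) / (2 * real n)" "q n = (real n - 1) / (2 * real n)"
    using n by (auto simp: p_def q_def field_simps)
  then show ?thesis using n by (simp add: rho_def)
qed

lemma prod_eq:
  assumes "m \<ge> 1"
  shows "(\<Prod>k=1..j. rho (m + k)) = real m * (real m + 1) / ((real m + real j) * (real m + real j + 1))"
proof (induction j)
  case 0 then show ?case using assms by simp
next
  case (Suc j)
  have a: "(\<Prod>k=1..Suc j. rho (m + k)) = (\<Prod>k=1..j. rho (m + k)) * rho (m + Suc j)"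
    by simp
  have b: "rho (m + Suc j) = (real m + real j) / (real m + real j + 2)"
    using assms by (subst rho_eq) (auto simp: field_simps)
  have c: "real m + real j + 1 > 0" "real m + real j + 2 > 0" "real m + real j > 0" using assms by auto
  show ?case unfolding a b Suc using c by (simp add: divide_simps) (simp add: algebra_simps)
qed

lemma sum_eq:
  assumes "m \<ge> 1"
  shows "1 + (\<Sum>j=1..t. \<Prod>k=1..j. rho (m + k)) = (real m + 1) * (real t + 1) / (real m + real t + 1)"
proof (induction t)
  case 0 then show ?case by simp
next
  case (Suc t)
  have "1 + (\<Sum>j=1..Suc t. \<Prod>k=1..j. rho (m + k)) = (1 + (\<Sum>j=1..t. \<Prod>k=1..j. rho (m + k))) + (\<Prod>k=1..Suc t. rho (m + k))"
    by simp
  also have "\<dots> = (real m + 1) * (real t + 1) / (real m + real t + 1) + real m * (real m + 1) / ((real m + real t + 1) * (real m + real t + 2))"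
    using Suc prod_eq[OF assms, of "Suc t"] by (simp add: add_ac)
  also have "\<dots> = (real m + 1) * (real (Suc t) + 1) / (real m + real (Suc t) + 1)"
    by (simp add: divide_simps) (simp add: algebra_simps)
  finally show ?case .
qed

lemma D_eq:
  assumes "m \<ge> 1" "m < n"
  shows "D m n = (real m + 1) * real (n - m) / real n"
proof -
  have "D m n = 1 + (\<Sum>j=1..n-m-1. \<Prod>k=1..j. rho (m + k))" using assms by (simp add: D_def)
  also have "\<dots> = (real m + 1) * (real (n-m-1) + 1) / (real m + real (n-m-1) + 1)"
    by (rule sum_eq[OF assms(1)])
  also have "\<dots> = (real m + 1) * real (n - m) / real n" using assms by (simp add: of_nat_diff)
  finally show ?thesis .
qed

lemma D_lim:
  assumes "m \<ge> 1"
  shows "(\<lambda>n. D m n) \<longlonglongrightarrow> real m + 1"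
proof -
  have ev: "\<forall>\<^sub>F n in sequentially. (real m + 1) * (1 - real m / real n) = D m n"
    using eventually_gt_at_top[of m]
  proof (rule eventually_mono)
    fix n assume "m < n"
    then show "(real m + 1) * (1 - real m / real n) = D m n"
      using D_eq[OF assms] by (simp add: field_simps of_nat_diff)
  qed
  have "(\<lambda>n. (real m + 1) * (1 - real m / real n)) \<longlonglongrightarrow> (real m + 1) * (1 - 0)"
    by (intro tendsto_intros lim_const_over_n)
  then show ?thesis using ev by (simp add: tendsto_cong)
qed

theorem lemma11:
  fixes \<epsilon> :: real
  assumes "\<epsilon> > 0"
  shows "\<exists>i0::nat. i0 > 0 \<and>
     (\<forall>i j. i0 \<le> i \<and> i < j \<longrightarrow>
        (1 - \<epsilon>) * (real i * real (j - i) / real j) \<le> D i j \<and>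
        D i j \<le> (1 + \<epsilon>) * (real i * real (j - i) / real j)) \<and>
     (\<forall>i. i0 \<le> i \<longrightarrow>
        convergent (\<lambda>n. D i n) \<and>
        (1 - \<epsilon>) * real i \<le> Dlim i \<and> Dlim i \<le> (1 + \<epsilon>) * real i)"
proof (intro exI conjI allI impI)
  define i0 where "i0 = nat \<lceil>1/\<epsilon>\<rceil> + 1"
  show "i0 > 0" by (simp add: i0_def)
  have key: "real i + 1 \<le> (1 + \<epsilon>) * real i" "(1 - \<epsilon>) * real i \<le> real i + 1" "i \<ge> 1"
    if "i0 \<le> i" for i
  proof -
    have "1/\<epsilon> \<le> real (nat \<lceil>1/\<epsilon>\<rceil>)" by linarith
    then have "1/\<epsilon> \<le> real i" using that unfolding i0_def by linarith
    then have "1 \<le> \<epsilon> * real i" using assms by (simp add: field_simps)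
    then show "real i + 1 \<le> (1 + \<epsilon>) * real i" by (simp add: algebra_simps)
    show "(1 - \<epsilon>) * real i \<le> real i + 1" using assms by (simp add: algebra_simps)
    show "i \<ge> 1" using that unfolding i0_def by simp
  qed
  {
    fix i j :: nat assume h: "i0 \<le> i \<and> i < j"
    have De: "D i j = (real i + 1) * (real (j - i) / real j)" using D_eq[OF key(3) h[THEN conjunct2]] h by simp
    have nn: "real (j - i) / real j \<ge> 0" by simp
    show "(1 - \<epsilon>) * (real i * real (j - i) / real j) \<le> D i j"
      unfolding De using mult_right_mono[OF key(2)[OF h[THEN conjunct1]] nn] by simp
    show "D i j \<le> (1 + \<epsilon>) * (real i * real (j - i) / real j)"
      unfolding De using mult_right_mono[OF key(1)[OF h[THEN conjunct1]] nn] by simp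
  next
    fix i :: nat assume h: "i0 \<le> i"
    have L: "(\<lambda>n. D i n) \<longlonglongrightarrow> real i + 1" using D_lim key(3)[OF h] by blast
    then show "convergent (\<lambda>n. D i n)" by (auto simp: convergent_def)
    have "Dlim i = real i + 1" unfolding Dlim_def using L by (rule limI)
    then show "(1 - \<epsilon>) * real i \<le> Dlim i" "Dlim i \<le> (1 + \<epsilon>) * real i"
      using key[OF h] by auto
  }
qed

end
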